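(* Let $n\ge2$ and $w\in\widetilde{\mathfrak S}_n$. A total order $\rho$ of $\mathrm{Inv}_2(w)$ is a reflection order of $w$ if and only if both of the following hold: (i) for each $[x,y,z]\in\binom{\mathbb Z}{3}_n$, the restriction of $\rho$ to $P([x,y,z])\cap\mathrm{Inv}_2(w)$ is either a prefix of $P([x,y,z])$ listed in lex order, or a suffix of $P([x,y,z])$ listed in antilex order; (ii) for each pair $[x,y],[x,y+n]\in\mathrm{Inv}_2(w)$, the element $[x,y]$ appears before $[x,y+n]$ in $\rho$.
   Context: The affine symmetric group $\widetilde{\mathfrak S}_n$ consists of bijections $w:\mathbb Z\to\mathbb Z$ with $w(x+n)=w(x)+n$ and $\sum_{i=1}^n w(i)=\binom{n+1}{2}$, under composition; $s_i$ ($i\in\mathbb Z/n\mathbb Z$) swaps $j,j+1$ for all $j\equiv i\pmod n$ and fixes other integers; a reduced word for $w$ is a shortest sequence $i_1\cdots i_\ell$ with $s_{i_1}\cdots s_{i_\ell}=w$. The reflection order of a reduced word $i_1\cdots i_\ell$ is $(\rho_1,\dots,\rho_\ell)$ with $\rho_j=(w^{(j)}(i_j),w^{(j)}(i_j+1))$, $w^{(j)}=s_{i_1}\cdots s_{i_{j-1}}$; reflection orders of $w$ are those of its reduced words, viewed as total orders of $\mathrm{Inv}_2(w)$ by identifying $(a,b)$ with $[a,b]$. $\binom{\mathbb Z}{m}_n$ is the set of $m$-subsets of $\mathbb Z$ with pairwise distinct residues mod $n$, modulo simultaneous translation by multiples of $n$ (for $m>1$), each written $[x_1,\dots,x_m]$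 with $x_1<\dots<x_m$. For $X=[x_1,\dots,x_m]$, $X_i$ is $X$ with $x_i$ removed; $P(X)=\{X_1,\dots,X_m\}$, lex order $(X_m,\dots,X_1)$, antilex order $(X_1,\dots,X_m)$; a prefix is a set $\{X_m,\dots,X_i\}$, a suffix a set $\{X_i,\dots,X_1\}$ (empty set counts as both). $\mathrm{Inv}_2(w)=\{[x,y]\in\binom{\mathbb Z}{2}_n: w^{-1}(x)>w^{-1}(y)\}$. *)

theory Defs
  imports Main
begin

definition affine_perm :: "nat \<Rightarrow> (int \<Rightarrow> int) \<Rightarrow> bool" where
  "affine_perm n w \<longleftrightarrow> bij w \<and> (\<forall>x. w (x + int n) = w x + int n)
     \<and> (\<Sum>i = 1..int n. w i) = int n * (int n + 1) div 2"

definition sref :: "nat \<Rightarrow> nat \<Rightarrow> int \<Rightarrow> int" where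
  "sref n i x = (if x mod int n = int i mod int n then x + 1
                 else if x mod int n = (int i + 1) mod int n then x - 1 else x)"

text \<open>Word i_1 ... i_l (letters in {0..n-1}, representing Z/nZ) and its product s_{i_1} o ... o s_{i_l}.\<close>
definition is_word :: "nat \<Rightarrow> nat list \<Rightarrow> bool" where
  "is_word n ws \<longleftrightarrow> (\<forall>i\<in>set ws. i < n)"

definition word_prod :: "nat \<Rightarrow> nat list \<Rightarrow> int \<Rightarrow> int" where
  "word_prod n ws = foldr (\<lambda>i f. sref n i \<circ> f) ws id"

definition reduced_word :: "nat \<Rightarrow> (int \<Rightarrow> int) \<Rightarrow> nat list \<Rightarrow> bool" where
  "reduced_word n w ws \<longleftrightarrow> is_word n ws \<and> word_prod n ws = w \<and>
     (\<forall>vs. is_word n vs \<and> word_prod n vs = w \<longrightarrow> length ws \<le> length vs)"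

text \<open>Class of a finite subset of Z modulo simultaneous translation by multiples of n.\<close>
definition tcls :: "nat \<Rightarrow> int set \<Rightarrow> int set set" where
  "tcls n S = {(\<lambda>x. x + k * int n) ` S | k. True}"

definition Inv2 :: "nat \<Rightarrow> (int \<Rightarrow> int) \<Rightarrow> int set set set" where
  "Inv2 n w = {tcls n {x, y} | x y. x < y \<and> x mod int n \<noteq> y mod int n
                 \<and> inv w x > inv w y}"

definition refl_seq :: "nat \<Rightarrow> nat list \<Rightarrow> int set set list" where
  "refl_seq n ws = map (\<lambda>j. tcls n {word_prod n (take j ws) (int (ws ! j)),
                                    word_prod n (take j ws) (int (ws ! j) + 1)})
                       [0..<length ws]"

definition reflection_order :: "nat \<Rightarrow> (int \<Rightarrow> int) \<Rightarrow> int set set list \<Rightarrow> bool" where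
  "reflection_order n w \<rho> \<longleftrightarrow> (\<exists>ws. reduced_word n w ws \<and> \<rho> = refl_seq n ws)"

text \<open>A total order of a finite set, represented as a list enumerating it without repetition.\<close>
definition total_order_of :: "'a set \<Rightarrow> 'a list \<Rightarrow> bool" where
  "total_order_of A \<rho> \<longleftrightarrow> distinct \<rho> \<and> set \<rho> = A"

definition before :: "'a list \<Rightarrow> 'a \<Rightarrow> 'a \<Rightarrow> bool" where
  "before \<rho> a b \<longleftrightarrow> (\<exists>i j. i < j \<and> j < length \<rho> \<and> \<rho> ! i = a \<and> \<rho> ! j = b)"

text \<open>For X=[x,y,z]: lex order (X_3,X_2,X_1) = ([x,y],[x,z],[y,z]),
  antilex order (X_1,X_2,X_3) = ([y,z],[x,z],[x,y]).\<close>
definition lex3 :: "nat \<Rightarrow> int \<Rightarrow> int \<Rightarrow> int \<Rightarrow> int set set list" where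
  "lex3 n x y z = [tcls n {x, y}, tcls n {x, z}, tcls n {y, z}]"

definition antilex3 :: "nat \<Rightarrow> int \<Rightarrow> int \<Rightarrow> int \<Rightarrow> int set set list" where
  "antilex3 n x y z = [tcls n {y, z}, tcls n {x, z}, tcls n {x, y}]"

definition cond_i :: "nat \<Rightarrow> (int \<Rightarrow> int) \<Rightarrow> int set set list \<Rightarrow> bool" where
  "cond_i n w \<rho> \<longleftrightarrow>
    (\<forall>x y z. x < y \<and> y < z \<and> x mod int n \<noteq> y mod int n \<and> x mod int n \<noteq> z mod int n
       \<and> y mod int n \<noteq> z mod int n \<longrightarrow>
       (let R = filter (\<lambda>c. c \<in> set (lex3 n x y z) \<inter> Inv2 n w) \<rho> in
        (\<exists>k\<le>3. R = take k (lex3 n x y z)) \<or> (\<exists>k\<le>3. R = take k (antilex3 n x y z))))"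

definition cond_ii :: "nat \<Rightarrow> (int \<Rightarrow> int) \<Rightarrow> int set set list \<Rightarrow> bool" where
  "cond_ii n w \<rho> \<longleftrightarrow>
    (\<forall>x y. x < y \<and> tcls n {x, y} \<in> Inv2 n w \<and> tcls n {x, y + int n} \<in> Inv2 n w \<longrightarrow>
       before \<rho> (tcls n {x, y}) (tcls n {x, y + int n}))"

end

theory Submission
  imports Defs
begin


definition per :: "nat \<Rightarrow> (int \<Rightarrow> int) \<Rightarrow> bool" where
  "per n u \<longleftrightarrow> bij u \<and> (\<forall>x. u (x + int n) = u x + int n)"

lemma per_mult:
  assumes "per n u" shows "u (x + k * int n) = u x + k * int n"
proof (induction k rule: int_induct[where k=0])
  case base then show ?case by simp
next
  case (step1 i)
  have "u (x + (i+1) * int n) = u ((x + i * int n) + int n)" by (simp add: algebra_simps)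
  also have "\<dots> = u (x + i * int n) + int n" using assms per_def by blast
  finally show ?case using step1 by (simp add: algebra_simps)
next
  case (step2 i)
  have "u (x + i * int n) = u ((x + (i - 1) * int n) + int n)" by (simp add: algebra_simps)
  also have "\<dots> = u (x + (i - 1) * int n) + int n" using assms per_def by blast
  finally show ?case using step2 by (simp add: algebra_simps)
qed

lemma per_inv:
  assumes "per n u" shows "per n (inv u)"
proof -
  have b: "bij u" using assms per_def by blast
  have "inv u (x + int n) = inv u x + int n" for x
  proof -
    have "u (inv u x) = x" using b by (simp add: bij_is_surj surj_f_inv_f)
    then have "u (inv u x + int n) = x + int n" using assms unfolding per_def by simp
    then show ?thesis using b by (metis bij_inv_eq_iff)
  qed
  then show ?thesis using b bij_imp_bij_inv per_def by blast
qed

lemma per_comp: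
  assumes "per n u" "per n v" shows "per n (u \<circ> v)"
  using assms unfolding per_def by (auto intro: bij_comp)

lemma per_res:
  assumes "per n u" shows "u a mod int n = u b mod int n \<longleftrightarrow> a mod int n = b mod int n"
proof -
  have 1: "v a mod int n = v b mod int n" if H: "per n v" "a mod int n = b mod int n" for v a b
  proof -
    obtain k where "b = a + k * int n" using H(2)
      by (metis mod_div_mult_eq add.commute mult.commute diff_add_cancel mod_eq_dvd_iff dvd_def)
    then show ?thesis using per_mult[OF H(1)] by simp
  qed
  have b: "bij u" using assms per_def by blast
  show ?thesis
  proof
    assume "u a mod int n = u b mod int n"
    from 1[OF per_inv[OF assms] this] show "a mod int n = b mod int n"
      using b by (simp add: bij_is_inj)
  qed (rule 1[OF assms])
qed

lemma mod_ex: "(a::int) mod int n = b mod int n \<longleftrightarrow> (\<exists>k. b = a + k * int n)"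
proof
  assume "a mod int n = b mod int n"
  then have "int n dvd b - a" by (metis mod_eq_dvd_iff)
  then obtain k where "b - a = int n * k" by (auto simp: dvd_def)
  then show "\<exists>k. b = a + k * int n" by (intro exI[of _ k]) (simp add: algebra_simps)
qed auto



lemma mod_succ_neq: assumes "n \<ge> 2" shows "((x::int) + 1) mod int n \<noteq> x mod int n"
proof
  assume "(x + 1) mod int n = x mod int n"
  then have "int n dvd 1" by (metis add_diff_cancel_left' mod_eq_dvd_iff)
  then show False using assms by simp
qed

lemma mod_succ_iff: "((x::int) + 1) mod int n = (y + 1) mod int n \<longleftrightarrow> x mod int n = y mod int n"
  by (metis add_diff_cancel_right' mod_diff_cong mod_add_cong)

lemma sref_cases:
  assumes "n \<ge> 2"
  shows "(sref n i x = x + 1 \<and> x mod int n = int i mod int n)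
       \<or> (sref n i x = x - 1 \<and> x mod int n = (int i + 1) mod int n \<and> x mod int n \<noteq> int i mod int n)
       \<or> (sref n i x = x \<and> x mod int n \<noteq> int i mod int n \<and> x mod int n \<noteq> (int i + 1) mod int n)"
  unfolding sref_def by auto

lemma sref_invol: assumes "n \<ge> 2" shows "sref n i (sref n i x) = x"
proof -
  have a: "(x + 1) mod int n \<noteq> int i mod int n" if "x mod int n = int i mod int n"
    using mod_succ_neq[OF assms, where x=x] that by metis
  have b: "(x - 1) mod int n = int i mod int n" if "x mod int n = (int i + 1) mod int n"
    using that mod_succ_iff[where x="x - 1" and y="int i" and n=n] by simp
  have c: "(x + 1) mod int n = (int i + 1) mod int n" if "x mod int n = int i mod int n"
    using that mod_succ_iff by blast
  have d: "(int i + 1) mod int n \<noteq> int i mod int n" using mod_succ_neq[OF assms] by blast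
  show ?thesis using sref_cases[OF assms, of i x] a b c d
    unfolding sref_def by auto
qed

lemma sref_comp: assumes "n \<ge> 2" shows "sref n i \<circ> sref n i = id"
  using sref_invol[OF assms] by (simp add: fun_eq_iff)

lemma bij_sref: assumes "n \<ge> 2" shows "bij (sref n i)"
  using sref_comp[OF assms] by (metis o_bij)

lemma inv_sref: assumes "n \<ge> 2" shows "inv (sref n i) = sref n i"
  using sref_comp[OF assms] by (metis inv_unique_comp)

lemma per_sref: assumes "n \<ge> 2" shows "per n (sref n i)"
  unfolding per_def using bij_sref[OF assms] by (simp add: sref_def)

definition adj :: "nat \<Rightarrow> nat \<Rightarrow> int \<Rightarrow> int \<Rightarrow> bool" where
  "adj n i p q \<longleftrightarrow> (p mod int n = int i mod int n \<and> q = p + 1) \<or> (q mod int n = int i mod int n \<and> p = q + 1)"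

lemma sref_order_lt:
  assumes "n \<ge> 2" "p < q"
  shows "sref n i p < sref n i q \<longleftrightarrow> \<not> adj n i p q"
proof (cases "q = p + 1")
  case True
  have c: "(p + 1) mod int n = (int i + 1) mod int n \<longleftrightarrow> p mod int n = int i mod int n"
    using mod_succ_iff by blast
  have d: "(p + 1) mod int n \<noteq> int i mod int n" if "p mod int n = int i mod int n"
    using mod_succ_neq[OF assms(1), where x=p] that by metis
  show ?thesis using sref_cases[OF assms(1), of i p] sref_cases[OF assms(1), of i q] True c d
    unfolding adj_def by auto
next
  case False
  then have q2: "q \<ge> p + 2" using assms by simp
  have e: "\<not> (p mod int n = int i mod int n \<and> q mod int n = (int i + 1) mod int n \<and> q = p + 2)"
  proof
    assume h: "p mod int n = int i mod int n \<and> q mod int n = (int i + 1) mod int n \<and> q = p + 2"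
    then have "(p + 1 + 1) mod int n = (int i + 1) mod int n" by (metis add.assoc one_add_one)
    then have "(p+1) mod int n = int i mod int n" using mod_succ_iff by blast
    with h mod_succ_neq[OF assms(1), where x=p] show False by simp
  qed
  show ?thesis using sref_cases[OF assms(1), of i p] sref_cases[OF assms(1), of i q] q2 e
    unfolding adj_def by auto
qed

lemma sref_order:
  assumes "n \<ge> 2" "p \<noteq> q"
  shows "sref n i p < sref n i q \<longleftrightarrow> ((p < q) \<noteq> adj n i p q)"
proof (cases "p < q")
  case True then show ?thesis using sref_order_lt[OF assms(1) True] by simp
next
  case False
  then have "q < p" using assms by simp
  from sref_order_lt[OF assms(1) this, of i] have "sref n i q < sref n i p \<longleftrightarrow> \<not> adj n i q p" .
  moreover have "adj n i q p = adj n i p q" unfolding adj_def by auto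
  moreover have "sref n i p \<noteq> sref n i q" using bij_sref[OF assms(1)] assms(2)
    by (metis bij_is_inj injD)
  ultimately show ?thesis using False by auto
qed



lemma tcls_eq_iff: "tcls n S = tcls n T \<longleftrightarrow> (\<exists>k. S = (\<lambda>x. x + k * int n) ` T)"
proof
  assume h: "tcls n S = tcls n T"
  have "S \<in> tcls n S" unfolding tcls_def by (auto intro!: exI[of _ 0])
  then have "S \<in> tcls n T" using h by simp
  then show "\<exists>k. S = (\<lambda>x. x + k * int n) ` T" unfolding tcls_def by auto
next
  assume "\<exists>k. S = (\<lambda>x. x + k * int n) ` T"
  then obtain k where k: "S = (\<lambda>x. x + k * int n) ` T" by blast
  have "(\<lambda>x. x + j * int n) ` S = (\<lambda>x. x + (j + k) * int n) ` T" for j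
    unfolding k image_image by (simp add: algebra_simps)
  moreover have "(\<lambda>x. x + j * int n) ` T = (\<lambda>x. x + (j - k) * int n) ` S" for j
    unfolding k image_image by (simp add: algebra_simps)
  ultimately show "tcls n S = tcls n T" unfolding tcls_def by blast
qed

lemma tcls_pair_eq: "tcls n {a, b} = tcls n {c, d} \<longleftrightarrow> (\<exists>k. {a, b} = {c + k * int n, d + k * int n})"
  unfolding tcls_eq_iff by simp

lemma tcls_pair_ord:
  assumes "a < b" "c < d"
  shows "tcls n {a, b} = tcls n {c, d} \<longleftrightarrow> (\<exists>k. a = c + k * int n \<and> b = d + k * int n)"
  unfolding tcls_pair_eq using assms by (auto simp: doubleton_eq_iff)

lemma tcls_swap: "tcls n {a, b} = tcls n {b, a}" by (simp add: insert_commute)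

lemma inv_mult: assumes "per n u" shows "inv u (x + k * int n) = inv u x + k * int n"
  using per_mult[OF per_inv[OF assms]] .

lemma mem_Inv2:
  assumes "per n u" "a mod int n \<noteq> b mod int n"
  shows "tcls n {a, b} \<in> Inv2 n u \<longleftrightarrow> ((a < b) = (inv u b < inv u a))"
proof
  assume "tcls n {a, b} \<in> Inv2 n u"
  then obtain x y where xy: "tcls n {a, b} = tcls n {x, y}" "x < y" "inv u y < inv u x"
    unfolding Inv2_def by auto
  then obtain k where "{a, b} = {x + k * int n, y + k * int n}" using tcls_pair_eq by blast
  then have "(a = x + k * int n \<and> b = y + k * int n) \<or> (a = y + k * int n \<and> b = x + k * int n)"
    by (auto simp: doubleton_eq_iff)
  then show "(a < b) = (inv u b < inv u a)"
    using xy inv_mult[OF assms(1)] by auto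
next
  assume h: "(a < b) = (inv u b < inv u a)"
  have ab: "a \<noteq> b" using assms(2) by auto
  have "inv u a \<noteq> inv u b" using assms(1) ab unfolding per_def
    by (metis bij_inv_eq_iff)
  show "tcls n {a, b} \<in> Inv2 n u"
  proof (cases "a < b")
    case True then show ?thesis using h assms(2) unfolding Inv2_def by auto
  next
    case False
    then have "b < a" "inv u a < inv u b" using h ab \<open>inv u a \<noteq> inv u b\<close> by auto
    moreover have "b mod int n \<noteq> a mod int n" using assms(2) by simp
    ultimately show ?thesis unfolding Inv2_def tcls_swap[of n a b] by blast
  qed
qed

lemma Inv2_form:
  assumes "c \<in> Inv2 n u"
  shows "\<exists>a b. c = tcls n {a, b} \<and> a < b \<and> a mod int n \<noteq> b mod int n \<and> inv u b < inv u a"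
  using assms unfolding Inv2_def by auto

lemma adj_ex: "adj n i p q \<longleftrightarrow> (\<exists>k. {p, q} = {int i + k * int n, int i + k * int n + 1})"
proof -
  have "p mod int n = int i mod int n \<longleftrightarrow> (\<exists>k. p = int i + k * int n)" for p
    using mod_ex[of "int i" n p] by metis
  then show ?thesis unfolding adj_def by (auto simp: doubleton_eq_iff)
qed

lemma Inv2_step_pair:
  assumes n2: "n \<ge> 2" and u: "per n u" and ab: "a mod int n \<noteq> b mod int n"
  shows "tcls n {a, b} \<in> Inv2 n (u \<circ> sref n i) \<longleftrightarrow>
         (tcls n {a, b} \<in> Inv2 n u) \<noteq> (tcls n {a, b} = tcls n {u (int i), u (int i + 1)})"
proof -
  have bu: "bij u" using u per_def by blast
  have us: "per n (u \<circ> sref n i)" using per_comp[OF u per_sref[OF n2]] .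
  have iv: "inv (u \<circ> sref n i) = sref n i \<circ> inv u"
    using o_inv_distrib[OF bu bij_sref[OF n2]] inv_sref[OF n2] by simp
  define p q where "p = inv u a" and "q = inv u b"
  have pq: "p \<noteq> q" using ab bu unfolding p_def q_def by (metis bij_inv_eq_iff)
  have L: "tcls n {a, b} \<in> Inv2 n (u \<circ> sref n i) \<longleftrightarrow> ((a < b) = (sref n i q < sref n i p))"
    using mem_Inv2[OF us ab] iv unfolding p_def q_def by simp
  have R1: "tcls n {a, b} \<in> Inv2 n u \<longleftrightarrow> ((a < b) = (q < p))"
    using mem_Inv2[OF u ab] unfolding p_def q_def by simp
  have so: "sref n i q < sref n i p \<longleftrightarrow> ((q < p) \<noteq> adj n i q p)"
    using sref_order[OF n2] pq by metis
  have "tcls n {a, b} = tcls n {u (int i), u (int i + 1)} \<longleftrightarrow>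
        (\<exists>k. {a, b} = {u (int i + k * int n), u (int i + k * int n + 1)})"
  proof -
    have e1: "u (int i + k * int n) = u (int i) + k * int n" for k using per_mult[OF u] by simp
    have e2: "u (int i + k * int n + 1) = u (int i + 1) + k * int n" for k
      using per_mult[OF u, of "int i + 1"] by (simp add: algebra_simps)
    show ?thesis unfolding tcls_pair_eq e1 e2 by simp
  qed
  also have "\<dots> \<longleftrightarrow> (\<exists>k. {q, p} = {int i + k * int n, int i + k * int n + 1})"
  proof -
    have "{a, b} = {u X, u Y} \<longleftrightarrow> {q, p} = {X, Y}" for X Y
      using bu unfolding p_def q_def doubleton_eq_iff
      by (metis bij_inv_eq_iff)
    then show ?thesis by simp
  qed
  also have "\<dots> \<longleftrightarrow> adj n i q p" using adj_ex by metis
  finally have R2: "tcls n {a, b} = tcls n {u (int i), u (int i + 1)} \<longleftrightarrow> adj n i q p" .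
  show ?thesis using L R1 R2 so by auto
qed

lemma per_res_succ:
  assumes "n \<ge> 2" "per n u" shows "u x mod int n \<noteq> u (x + 1) mod int n"
  using per_res[OF assms(2)] mod_succ_neq[OF assms(1), of x] by metis

lemma Inv2_step:
  assumes n2: "n \<ge> 2" and u: "per n u"
  shows "c \<in> Inv2 n (u \<circ> sref n i) \<longleftrightarrow>
         (c \<in> Inv2 n u) \<noteq> (c = tcls n {u (int i), u (int i + 1)})"
proof (cases "\<exists>a b. c = tcls n {a, b} \<and> a mod int n \<noteq> b mod int n")
  case True
  then obtain a b where "c = tcls n {a, b}" "a mod int n \<noteq> b mod int n" by blast
  then show ?thesis using Inv2_step_pair[OF n2 u] by simp
next
  case False
  then have "c \<notin> Inv2 n (u \<circ> sref n i)" "c \<notin> Inv2 n u" using Inv2_form by blast+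
  moreover have "c \<noteq> tcls n {u (int i), u (int i + 1)}"
    using False per_res_succ[OF n2 u] by blast
  ultimately show ?thesis by simp
qed



lemma foldr_comp: "foldr (\<lambda>i f. sref n i \<circ> f) vs g = foldr (\<lambda>i f. sref n i \<circ> f) vs id \<circ> g"
  by (induction vs) (auto simp: fun_eq_iff)

lemma word_prod_snoc: "word_prod n (vs @ [i]) = word_prod n vs \<circ> sref n i"
  unfolding word_prod_def by (simp add: foldr_comp[of n vs "sref n i"])

lemma word_prod_Nil: "word_prod n [] = id" unfolding word_prod_def by simp

lemma per_id: "per n id" unfolding per_def by simp

lemma per_word: assumes "n \<ge> 2" shows "per n (word_prod n vs)"
proof (induction vs rule: rev_induct)
  case Nil then show ?case by (metis word_prod_Nil per_id)
next
  case (snoc i vs) then show ?case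
    using per_comp per_sref[OF assms] word_prod_snoc by metis
qed

lemma refl_seq_snoc:
  "refl_seq n (vs @ [i]) = refl_seq n vs @ [tcls n {word_prod n vs (int i), word_prod n vs (int i + 1)}]"
proof -
  have "[0..<length (vs @ [i])] = [0..<length vs] @ [length vs]" by simp
  then show ?thesis unfolding refl_seq_def by (simp add: nth_append)
qed

lemma length_refl_seq: "length (refl_seq n ws) = length ws" unfolding refl_seq_def by simp

lemma Inv2_step_set:
  assumes n2: "n \<ge> 2" and u: "per n u"
  shows "Inv2 n (u \<circ> sref n i) = (if tcls n {u (int i), u (int i + 1)} \<in> Inv2 n u
           then Inv2 n u - {tcls n {u (int i), u (int i + 1)}}
           else insert (tcls n {u (int i), u (int i + 1)}) (Inv2 n u))"
  using Inv2_step[OF n2 u, of _ i] by auto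

lemma Inv2_id: "Inv2 n id = {}"
  unfolding Inv2_def by auto

lemma Inv2_word_bound:
  assumes n2: "n \<ge> 2"
  shows "finite (Inv2 n (word_prod n vs)) \<and> card (Inv2 n (word_prod n vs)) \<le> length vs"
proof (induction vs rule: rev_induct)
  case Nil then show ?case using Inv2_id[of n] by (simp only: word_prod_Nil) simp
next
  case (snoc i vs)
  let ?u = "word_prod n vs"
  have e: "Inv2 n (word_prod n (vs @ [i])) = (if tcls n {?u (int i), ?u (int i + 1)} \<in> Inv2 n ?u
           then Inv2 n ?u - {tcls n {?u (int i), ?u (int i + 1)}}
           else insert (tcls n {?u (int i), ?u (int i + 1)}) (Inv2 n ?u))"
    unfolding word_prod_snoc using Inv2_step_set[OF n2 per_word[OF n2]] by blast
  show ?case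
  proof (cases "tcls n {?u (int i), ?u (int i + 1)} \<in> Inv2 n ?u")
    case True
    then show ?thesis using snoc e by (simp add: card_Diff_singleton_if) linarith
  next
    case False
    then show ?thesis using snoc e by (simp add: card_insert_if)
  qed
qed



lemma affine_per: "affine_perm n w \<Longrightarrow> per n w"
  unfolding affine_perm_def per_def by blast

lemma sum_shift1:
  fixes m a :: int and h :: "int \<Rightarrow> int"
  assumes "m \<ge> 1" "\<And>x. h (x + m) = (h x :: int)"
  shows "sum h {a+1..a+m} = sum h {a..a+m-1}"
proof -
  have "{a..a+m} = insert a {a+1..a+m}" using assms by auto
  then have 1: "sum h {a..a+m} = h a + sum h {a+1..a+m}" by simp
  have "{a..a+m} = insert (a+m) {a..a+m-1}" using assms by auto
  then have 2: "sum h {a..a+m} = h (a+m) + sum h {a..a+m-1}" by simp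
  show ?thesis using 1 2 assms(2)[of a] by simp
qed

lemma sum_window:
  fixes m a :: int and h :: "int \<Rightarrow> int"
  assumes "m \<ge> 1" "\<And>x. h (x + m) = (h x :: int)"
  shows "sum h {a..a+m-1} = sum h {1..m}"
proof (induction a rule: int_induct[where k=1])
  case base then show ?case by simp
next
  case (step1 i)
  then show ?case using sum_shift1[where h=h, OF assms, of i] by (simp add: algebra_simps)
next
  case (step2 i)
  then show ?case using sum_shift1[where h=h, OF assms, of "i - 1"] by (simp add: algebra_simps)
qed

lemma sum_comp_sref:
  assumes n2: "n \<ge> 2" and i: "i < n" and w: "per n w"
  shows "(\<Sum>x = 1..int n. w (sref n i x)) = (\<Sum>x = 1..int n. w x)"
proof -
  define m where "m = int n"
  have m1: "m \<ge> 1" using n2 m_def by simp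
  define W where "W = {int i .. int i + m - 1}"
  have wp: "w (x + m) = w x + m" for x using w unfolding per_def m_def by blast
  have sp: "sref n i (x + m) = sref n i x + m" for x using per_sref[OF n2] unfolding per_def m_def by blast
  have im: "int i mod m = int i" using i m_def by simp
  have sW: "sref n i x \<in> W" if "x \<in> W" for x
  proof -
    have x: "int i \<le> x" "x \<le> int i + m - 1" using that W_def by auto
    consider (a) "x mod m = int i mod m" | (b) "x mod m \<noteq> int i mod m" "x mod m = (int i + 1) mod m"
      | (c) "x mod m \<noteq> int i mod m" "x mod m \<noteq> (int i + 1) mod m" by blast
    then show ?thesis
    proof cases
      case a
      have "(x - int i) mod m = 0" using a by (simp add: mod_diff_eq[symmetric])
      moreover have "0 \<le> x - int i" "x - int i < m" using x by auto
      ultimately have "x = int i" by (simp add: mod_pos_pos_trivial)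
      then show ?thesis using a m1 n2 W_def unfolding sref_def m_def by auto
    next
      case b
      then have "x \<noteq> int i" by auto
      then show ?thesis using b x W_def unfolding sref_def m_def by auto
    next
      case c then show ?thesis using that unfolding sref_def m_def by auto
    qed
  qed
  have bW: "bij_betw (sref n i) W W"
    by (rule bij_betw_byWitness[where f'="sref n i"]) (use sW sref_invol[OF n2] in auto)
  define g where "g x = w (sref n i x) - x" for x
  have gp: "g (x + m) = g x" for x unfolding g_def sp wp by simp
  define f where "f x = w x - x" for x
  have fp: "f (x + m) = f x" for x unfolding f_def wp by simp
  have WW: "W = {int i .. int i + m - 1}" by (rule W_def)
  have "(\<Sum>x = 1..m. w (sref n i x)) = (\<Sum>x = 1..m. g x) + (\<Sum>x = 1..m. x)"
    unfolding g_def by (simp add: sum.distrib[symmetric])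
  also have "(\<Sum>x = 1..m. g x) = sum g W" unfolding WW using sum_window[where h=g, OF m1 gp] by simp
  also have "sum g W = sum (\<lambda>x. w (sref n i x)) W - sum (\<lambda>x. x) W"
    unfolding g_def by (simp add: sum_subtractf)
  also have "sum (\<lambda>x. w (sref n i x)) W = sum w W" using sum.reindex_bij_betw[OF bW, of w] .
  also have "sum w W - sum (\<lambda>x. x) W = sum f W" unfolding f_def by (simp add: sum_subtractf)
  also have "sum f W = (\<Sum>x = 1..m. f x)" unfolding WW using sum_window[where h=f, OF m1 fp] by simp
  finally show ?thesis unfolding m_def f_def by (simp add: sum_subtractf)
qed

lemma affine_step:
  assumes n2: "n \<ge> 2" and i: "i < n" and w: "affine_perm n w"
  shows "affine_perm n (w \<circ> sref n i)"
  using per_comp[OF affine_per[OF w] per_sref[OF n2]] sum_comp_sref[OF n2 i affine_per[OF w]] w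
  unfolding affine_perm_def per_def by simp

lemma strict_from_succ:
  assumes "\<And>x::int. f x < (f (x + 1) :: int)" "x < y"
  shows "f x < f y"
proof -
  have "f x < f (x + 1 + int d)" for d
  proof (induction d)
    case 0 then show ?case using assms(1) by simp
  next
    case (Suc d)
    then show ?case using assms(1)[of "x + 1 + int d"] by (simp add: algebra_simps)
  qed
  from this[of "nat (y - x - 1)"] show ?thesis using assms(2) by simp
qed

lemma gauss_int: "2 * (\<Sum>x = 1..int n. x) = int n * (int n + 1)"
proof (induction n)
  case 0 then show ?case by simp
next
  case (Suc n)
  have "{1..int (Suc n)} = insert (int n + 1) {1..int n}" by auto
  then show ?case using Suc by (simp add: algebra_simps)
qed

lemma Inv2_empty_id:
  assumes n2: "n \<ge> 2" and w: "affine_perm n w" and e: "Inv2 n w = {}"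
  shows "w = id"
proof -
  have pw: "per n w" using affine_per[OF w] .
  have bw: "bij w" using pw per_def by blast
  define g where "g = inv w"
  have gm: "g x < g y" if "x < y" for x y
  proof (cases "x mod int n = y mod int n")
    case True
    then obtain k where k: "y = x + k * int n" using mod_ex by blast
    then have "k > 0" using that n2 by (simp add: zero_less_mult_iff)
    then show ?thesis using inv_mult[OF pw, of x k] k n2 unfolding g_def by simp
  next
    case False
    have "tcls n {x, y} \<notin> Inv2 n w" using e by simp
    then have "\<not> (inv w y < inv w x)" using mem_Inv2[OF pw False] that by simp
    moreover have "inv w x \<noteq> inv w y" using False bw by (metis bij_inv_eq_iff)
    ultimately show ?thesis unfolding g_def by simp
  qed
  have gs: "g (x + 1) = g x + 1" for x
  proof (rule ccontr)
    assume "g (x + 1) \<noteq> g x + 1"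
    moreover have "g x < g (x + 1)" using gm by simp
    ultimately have lt: "g x + 1 < g (x + 1)" by simp
    define z where "z = w (g x + 1)"
    have gz: "g z = g x + 1" unfolding z_def g_def using bw by (simp add: bij_is_inj)
    have "x < z" using gm[of z x] gz by (cases "z \<le> x") (auto simp: order_le_less)
    moreover have "z < x + 1" using gm[of "x+1" z] gz lt by (cases "x + 1 \<le> z") (auto simp: order_le_less)
    ultimately show False by simp
  qed
  have gl: "g x = g 0 + x" for x
  proof (induction x rule: int_induct[where k=0])
    case base then show ?case by simp
  next
    case (step1 i) then show ?case using gs[of i] by simp
  next
    case (step2 i) then show ?case using gs[of "i - 1"] by simp
  qed
  define c where "c = g 0"
  have wx: "w x = x - c" for x
  proof -
    have "g (w x) = x" unfolding g_def using bw by (simp add: bij_is_inj)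
    then show ?thesis using gl[of "w x"] c_def by simp
  qed
  have s: "(\<Sum>i = 1..int n. w i) = int n * (int n + 1) div 2" using w affine_perm_def by blast
  have "(\<Sum>i = 1..int n. w i) = (\<Sum>i = 1..int n. i) - int n * c"
    unfolding wx by (simp add: sum_subtractf)
  then have "2 * (int n * (int n + 1) div 2) = int n * (int n + 1) - 2 * int n * c"
    using s gauss_int[of n] by simp
  moreover have "2 * (int n * (int n + 1) div 2) = int n * (int n + 1)" by simp
  ultimately have "int n * c = 0" by simp
  then have "c = 0" using n2 by simp
  then show ?thesis using wx by (simp add: fun_eq_iff)
qed

lemma descent_exists:
  assumes n2: "n \<ge> 2" and w: "affine_perm n w" and e: "Inv2 n w \<noteq> {}"
  shows "\<exists>i<n. w (int i + 1) < w (int i)"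
proof (rule ccontr)
  assume "\<not> ?thesis"
  then have h: "w (int i) < w (int i + 1)" if "i < n" for i
    using that by (metis not_less_iff_gr_or_eq per_res_succ[OF n2 affine_per[OF w]])
  have pw: "per n w" using affine_per[OF w] .
  have bw: "bij w" using pw per_def by blast
  have s: "w x < w (x + 1)" for x
  proof -
    define r k where "r = x mod int n" and "k = x div int n"
    have x: "x = r + k * int n" unfolding r_def k_def by simp
    have "0 \<le> r" "r < int n" using n2 unfolding r_def by auto
    then have "w (int (nat r)) < w (int (nat r) + 1)" using h[of "nat r"] by simp
    then have "w r < w (r + 1)" using \<open>0 \<le> r\<close> by simp
    moreover have "w (r + 1 + k * int n) = w (r + 1) + k * int n" using per_mult[OF pw] .
    ultimately show ?thesis using x per_mult[OF pw, of r k] by (simp add: algebra_simps)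
  qed
  have wm: "w x < w y" if "x < y" for x y using strict_from_succ[of w, OF s that] .
  have "Inv2 n w = {}"
  proof (rule ccontr)
    assume "Inv2 n w \<noteq> {}"
    then obtain c where "c \<in> Inv2 n w" by blast
    then obtain a b where ab: "a < b" "inv w b < inv w a" using Inv2_form by blast
    have "w (inv w b) < w (inv w a)" using wm ab(2) by blast
    then show False using ab(1) bw by (simp add: bij_is_surj surj_f_inv_f)
  qed
  with e show False by simp
qed

lemma exists_word:
  assumes n2: "n \<ge> 2"
  shows "affine_perm n w \<Longrightarrow> finite (Inv2 n w) \<Longrightarrow> card (Inv2 n w) = N \<Longrightarrow>
    \<exists>ws. is_word n ws \<and> word_prod n ws = w \<and> length ws = N"
proof (induction N arbitrary: w)
  case 0
  have "Inv2 n w = {}" using "0.prems"(2,3) by simp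
  then have "w = id" using Inv2_empty_id[OF n2 "0.prems"(1)] by simp
  then show ?case by (intro exI[of _ "[]"]) (simp add: is_word_def word_prod_Nil)
next
  case (Suc N)
  have "Inv2 n w \<noteq> {}" using Suc.prems(2,3) by auto
  then obtain i where i: "i < n" "w (int i + 1) < w (int i)" using descent_exists[OF n2 Suc.prems(1)] by blast
  have pw: "per n w" using affine_per[OF Suc.prems(1)] .
  define t where "t = tcls n {w (int i), w (int i + 1)}"
  have tI: "t \<in> Inv2 n w" unfolding t_def
  proof -
    have ij: "inj w" using pw unfolding per_def by (simp add: bij_is_inj)
    show "tcls n {w (int i), w (int i + 1)} \<in> Inv2 n w"
      using mem_Inv2[OF pw per_res_succ[OF n2 pw]] i(2) inv_f_f[OF ij] by simp
  qed
  then have e: "Inv2 n (w \<circ> sref n i) = Inv2 n w - {t}"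
    using Inv2_step_set[OF n2 pw, of i] t_def by simp
  have a: "affine_perm n (w \<circ> sref n i)" using affine_step[OF n2 i(1) Suc.prems(1)] .
  have c0: "card (Inv2 n w) = Suc N" by (rule Suc.prems(3))
  have c1: "card (Inv2 n w - {t}) = N"
    using card_Diff_singleton[OF tI] c0 by linarith
  have "card (Inv2 n (w \<circ> sref n i)) = N" using e c1 by (rule ssubst)
  moreover have "finite (Inv2 n (w \<circ> sref n i))" using e Suc.prems(2) by simp
  ultimately obtain ws where ws: "is_word n ws" "word_prod n ws = w \<circ> sref n i" "length ws = N"
    using Suc.IH[OF a] by blast
  have "word_prod n (ws @ [i]) = w" unfolding word_prod_snoc ws(2)
    by (simp add: comp_assoc sref_comp[OF n2])
  moreover have "is_word n (ws @ [i])" using ws(1) i(1) unfolding is_word_def by simp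
  ultimately show ?case using ws(3) by (intro exI[of _ "ws @ [i]"]) simp
qed



lemma ex_le3: "(\<exists>k\<le>(3::nat). P k) \<longleftrightarrow> P 0 \<or> P 1 \<or> P 2 \<or> P 3"
proof
  assume "\<exists>k\<le>3. P k"
  then obtain k where "k \<le> 3" "P k" by blast
  then have "k = 0 \<or> k = 1 \<or> k = 2 \<or> k = 3" by auto
  then show "P 0 \<or> P 1 \<or> P 2 \<or> P 3" using \<open>P k\<close> by auto
next
  assume h: "P 0 \<or> P 1 \<or> P 2 \<or> P 3"
  have "(0::nat) \<le> 3" "(1::nat) \<le> 3" "(2::nat) \<le> 3" "(3::nat) \<le> 3" by simp_all
  then show "\<exists>k\<le>3. P k" using h by blast
qed

lemma take3: "take 0 [A,B,C] = []" "take 1 [A,B,C] = [A]" "take 2 [A,B,C] = [A,B]" "take 3 [A,B,C] = [A,B,C]"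
  by (simp_all add: numeral_eq_Suc)

lemma R_cases:
  assumes "(\<exists>k\<le>3. R = take k [A,B,C]) \<or> (\<exists>k\<le>3. R = take k [C,B,A])"
  shows "R = [] \<or> R = [A] \<or> R = [A,B] \<or> R = [A,B,C] \<or> R = [C] \<or> R = [C,B] \<or> R = [C,B,A]"
  using assms unfolding ex_le3 take3 by blast

lemma comb_back:
  assumes d: "A \<noteq> B" "A \<noteq> C" "B \<noteq> C"
    and R: "(\<exists>k\<le>3. R = take k [A,B,C]) \<or> (\<exists>k\<le>3. R = take k [C,B,A])"
    and l: "R \<noteq> []" "last R = c"
    and S: "(A \<notin> set R \<and> B \<in> set R \<and> C \<in> set R \<and> c = C) \<or> (A \<in> set R \<and> B \<in> set R \<and> C \<in> set R \<and> c = B)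
            \<or> (A \<in> set R \<and> B \<in> set R \<and> C \<notin> set R \<and> c = A)"
  shows False
  using R_cases[OF R] l S d by (elim disjE) simp_all

lemma comb_fwd:
  assumes d: "A \<noteq> B" "A \<noteq> C" "B \<noteq> C"
    and R: "(\<exists>k\<le>3. R = take k [A,B,C]) \<or> (\<exists>k\<le>3. R = take k [C,B,A])"
    and m: "A \<in> set R \<longleftrightarrow> A \<in> I'" "B \<in> set R \<longleftrightarrow> B \<in> I'" "C \<in> set R \<longleftrightarrow> C \<in> I'"
    and t: "t = A \<or> t = B \<or> t = C" "t \<notin> I'"
    and c1: "B \<in> insert t I' \<longrightarrow> A \<in> insert t I' \<or> C \<in> insert t I'"
       "A \<in> insert t I' \<and> C \<in> insert t I' \<longrightarrow> B \<in> insert t I'"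
    and c2: "B \<in> I' \<longrightarrow> A \<in> I' \<or> C \<in> I'" "A \<in> I' \<and> C \<in> I' \<longrightarrow> B \<in> I'"
  shows "(\<exists>k\<le>3. R @ [t] = take k [A,B,C]) \<or> (\<exists>k\<le>3. R @ [t] = take k [C,B,A])"
  unfolding ex_le3 take3
  using R_cases[OF R] t(1) m t(2) c1 c2 d by (elim disjE) simp_all


lemma before_append: "before xs a b \<Longrightarrow> before (xs @ ys) a b"
proof -
  assume "before xs a b"
  then obtain i j where ij: "i < j" "j < length xs" "xs ! i = a" "xs ! j = b"
    unfolding before_def by blast
  then have "(xs @ ys) ! i = a" "(xs @ ys) ! j = b" "j < length (xs @ ys)"
    by (auto simp: nth_append)
  then show ?thesis using ij(1) unfolding before_def by blast
qed

lemma before_snoc: "a \<in> set xs \<Longrightarrow> before (xs @ [b]) a b"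
proof -
  assume "a \<in> set xs"
  then obtain i where i: "i < length xs" "xs ! i = a" by (auto simp: in_set_conv_nth)
  then have "(xs @ [b]) ! i = a" "(xs @ [b]) ! length xs = b" by (auto simp: nth_append)
  then show ?thesis using i(1) unfolding before_def by (intro exI[of _ i] exI[of _ "length xs"]) simp
qed

lemma before_last: "distinct (xs @ [c]) \<Longrightarrow> before (xs @ [c]) c d \<Longrightarrow> False"
proof -
  assume di: "distinct (xs @ [c])" and "before (xs @ [c]) c d"
  then obtain i j where ij: "i < j" "j < length (xs @ [c])" "(xs @ [c]) ! i = c" "(xs @ [c]) ! j = d"
    unfolding before_def by blast
  have il: "i < length xs" using ij by simp
  then have "xs ! i = c" using ij(3) by (simp add: nth_append)
  then have "c \<in> set xs" using il by auto
  then show False using di by simp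
qed

lemma before_butlast: "before (xs @ [c]) a b \<Longrightarrow> b \<noteq> c \<Longrightarrow> before xs a b"
proof -
  assume "before (xs @ [c]) a b" "b \<noteq> c"
  then obtain i j where ij: "i < j" "j < length (xs @ [c])" "(xs @ [c]) ! i = a" "(xs @ [c]) ! j = b"
    unfolding before_def by blast
  have "j \<noteq> length xs" using ij \<open>b \<noteq> c\<close> by auto
  then have jl: "j < length xs" using ij by simp
  then have "xs ! i = a" "xs ! j = b" using ij by (auto simp: nth_append)
  then show ?thesis using ij(1) jl unfolding before_def by blast
qed

lemma tcls_neq:
  assumes "n \<ge> 2" "x < y" "y < z" "x mod int n \<noteq> y mod int n"
  shows "tcls n {x, y} \<noteq> tcls n {x, z}" "tcls n {x, z} \<noteq> tcls n {y, z}" "tcls n {x, y} \<noteq> tcls n {y, z}"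
proof -
  have n0: "int n > 0" using assms by simp
  show "tcls n {x, y} \<noteq> tcls n {x, z}"
    using assms n0 unfolding tcls_pair_ord[OF assms(2) order.strict_trans[OF assms(2,3)]] by auto
  show "tcls n {x, z} \<noteq> tcls n {y, z}"
    using assms n0 unfolding tcls_pair_ord[OF order.strict_trans[OF assms(2,3)] assms(3)] by auto
  show "tcls n {x, y} \<noteq> tcls n {y, z}"
  proof
    assume "tcls n {x, y} = tcls n {y, z}"
    then obtain k where "x = y + k * int n" using tcls_pair_ord[OF assms(2,3)] by blast
    then show False using assms(4) by simp
  qed
qed

lemma tcls_neq2:
  assumes "n \<ge> 2" "x < y"
  shows "tcls n {x, y} \<noteq> tcls n {x, y + int n}"
  using assms tcls_pair_ord[OF assms(2), of x "y + int n" n] by auto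

lemma Inv2_res:
  assumes "tcls n {x, y} \<in> Inv2 n u" "x < y"
  shows "x mod int n \<noteq> y mod int n"
proof -
  obtain a b where ab: "tcls n {x, y} = tcls n {a, b}" "a < b" "a mod int n \<noteq> b mod int n"
    using Inv2_form[OF assms(1)] by blast
  then obtain k where "x = a + k * int n" "y = b + k * int n" using tcls_pair_ord[OF assms(2) ab(2)] by blast
  then show ?thesis using ab(3) by simp
qed

lemma closure3:
  assumes u: "per n u" and xyz: "x < y" "y < z"
    and r: "x mod int n \<noteq> y mod int n" "x mod int n \<noteq> z mod int n" "y mod int n \<noteq> z mod int n"
  shows "tcls n {x, z} \<in> Inv2 n u \<longrightarrow> tcls n {x, y} \<in> Inv2 n u \<or> tcls n {y, z} \<in> Inv2 n u"
    "tcls n {x, y} \<in> Inv2 n u \<and> tcls n {y, z} \<in> Inv2 n u \<longrightarrow> tcls n {x, z} \<in> Inv2 n u"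
proof -
  have bu: "bij u" using u per_def by blast
  have d: "inv u y \<noteq> inv u x" "inv u y \<noteq> inv u z"
    using bu xyz by (metis bij_inv_eq_iff order.strict_iff_not)+
  show "tcls n {x, z} \<in> Inv2 n u \<longrightarrow> tcls n {x, y} \<in> Inv2 n u \<or> tcls n {y, z} \<in> Inv2 n u"
    "tcls n {x, y} \<in> Inv2 n u \<and> tcls n {y, z} \<in> Inv2 n u \<longrightarrow> tcls n {x, z} \<in> Inv2 n u"
    unfolding mem_Inv2[OF u r(1)] mem_Inv2[OF u r(2)] mem_Inv2[OF u r(3)] using xyz d by auto
qed

lemma closure_pair:
  assumes u: "per n u" and "x < y" "x mod int n \<noteq> y mod int n" "tcls n {x, y + int n} \<in> Inv2 n u"
  shows "tcls n {x, y} \<in> Inv2 n u"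
proof -
  have r2: "x mod int n \<noteq> (y + int n) mod int n" using assms(3) by simp
  have "inv u (y + int n) < inv u x" using assms(2,4) mem_Inv2[OF u r2] by simp
  then have "inv u y < inv u x" using inv_mult[OF u, of y 1] by simp
  then show ?thesis using mem_Inv2[OF u assms(3)] assms(2) by simp
qed



lemma refl_seq_Nil: "refl_seq n [] = []" unfolding refl_seq_def by simp

lemma filter_snoc_split:
  assumes "\<forall>c\<in>set xs. c \<in> I'" "I = insert t I'"
  shows "filter (\<lambda>c. c \<in> S \<inter> I) (xs @ [t]) = filter (\<lambda>c. c \<in> S \<inter> I') xs @ (if t \<in> S then [t] else [])"
proof -
  have "filter (\<lambda>c. c \<in> S \<inter> I) xs = filter (\<lambda>c. c \<in> S \<inter> I') xs"
    using assms by (intro filter_cong) auto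
  then show ?thesis using assms by simp
qed

lemma forward:
  assumes n2: "n \<ge> 2"
  shows "length ws = card (Inv2 n (word_prod n ws)) \<Longrightarrow>
    distinct (refl_seq n ws) \<and> set (refl_seq n ws) = Inv2 n (word_prod n ws)
    \<and> cond_i n (word_prod n ws) (refl_seq n ws) \<and> cond_ii n (word_prod n ws) (refl_seq n ws)"
proof (induction ws rule: rev_induct)
  case Nil
  have e: "Inv2 n (word_prod n []) = {}" using Inv2_id[of n] by (simp only: word_prod_Nil)
  have "(0::nat) \<le> 3" by simp
  then show ?case unfolding refl_seq_Nil e cond_i_def cond_ii_def Let_def
    by (auto intro!: exI[of _ 0])
next
  case (snoc i vs)
  define u where "u = word_prod n vs"
  have pu: "per n u" unfolding u_def using per_word[OF n2] .
  define t where "t = tcls n {u (int i), u (int i + 1)}"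
  have wp: "word_prod n (vs @ [i]) = u \<circ> sref n i" unfolding u_def word_prod_snoc ..
  have pw: "per n (u \<circ> sref n i)" using per_comp[OF pu per_sref[OF n2]] .
  have bnd: "finite (Inv2 n u)" "card (Inv2 n u) \<le> length vs"
    using Inv2_word_bound[OF n2, of vs] unfolding u_def by auto
  have e: "Inv2 n (u \<circ> sref n i) = (if t \<in> Inv2 n u then Inv2 n u - {t} else insert t (Inv2 n u))"
    unfolding t_def using Inv2_step_set[OF n2 pu] .
  have len0: "length (vs @ [i]) = card (Inv2 n (u \<circ> sref n i))" using snoc.prems unfolding wp .
  have len: "length vs + 1 = card (Inv2 n (u \<circ> sref n i))"
    using len0 by (metis length_append_singleton Suc_eq_plus1)
  have tn: "t \<notin> Inv2 n u"
  proof
    assume "t \<in> Inv2 n u"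
    then have "card (Inv2 n (u \<circ> sref n i)) = card (Inv2 n u) - 1"
      using e by (simp add: card_Diff_singleton)
    then show False using len bnd by linarith
  qed
  have eI: "Inv2 n (u \<circ> sref n i) = insert t (Inv2 n u)" using e tn by simp
  have cu: "length vs = card (Inv2 n u)" using len eI tn bnd(1) by simp
  have IH: "distinct (refl_seq n vs)" "set (refl_seq n vs) = Inv2 n u"
    "cond_i n u (refl_seq n vs)" "cond_ii n u (refl_seq n vs)"
    using snoc.IH cu unfolding u_def by auto
  define \<rho>' where "\<rho>' = refl_seq n vs"
  have rs: "refl_seq n (vs @ [i]) = \<rho>' @ [t]" unfolding \<rho>'_def t_def u_def refl_seq_snoc ..
  have d: "distinct (\<rho>' @ [t])" using IH(1,2) tn unfolding \<rho>'_def by simp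
  have s: "set (\<rho>' @ [t]) = Inv2 n (u \<circ> sref n i)" using IH(2) eI unfolding \<rho>'_def by simp
  have ci: "cond_i n (u \<circ> sref n i) (\<rho>' @ [t])"
    unfolding cond_i_def Let_def
  proof (intro allI impI)
    fix x y z :: int
    assume H: "x < y \<and> y < z \<and> x mod int n \<noteq> y mod int n \<and> x mod int n \<noteq> z mod int n
       \<and> y mod int n \<noteq> z mod int n"
    define A B C where "A = tcls n {x, y}" and "B = tcls n {x, z}" and "C = tcls n {y, z}"
    have L: "lex3 n x y z = [A, B, C]" "antilex3 n x y z = [C, B, A]"
      unfolding lex3_def antilex3_def A_def B_def C_def by simp_all
    have sL: "set [A, B, C] = {A, B, C}" by simp
    have dABC: "A \<noteq> B" "A \<noteq> C" "B \<noteq> C" using tcls_neq[OF n2, of x y z] H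
      unfolding A_def B_def C_def by auto
    define R' where "R' = filter (\<lambda>c. c \<in> {A, B, C} \<inter> Inv2 n u) \<rho>'"
    have R'h: "(\<exists>k\<le>3. R' = take k [A, B, C]) \<or> (\<exists>k\<le>3. R' = take k [C, B, A])"
      using IH(3)[unfolded cond_i_def, rule_format, OF H] unfolding Let_def L sL R'_def \<rho>'_def .
    have fs: "filter (\<lambda>c. c \<in> {A, B, C} \<inter> Inv2 n (u \<circ> sref n i)) (\<rho>' @ [t])
        = R' @ (if t \<in> {A, B, C} then [t] else [])"
      unfolding R'_def eI by (rule filter_snoc_split) (use IH(2) \<rho>'_def in auto)
    have sR': "X \<in> set R' \<longleftrightarrow> X \<in> Inv2 n u" if "X \<in> {A, B, C}" for X
      unfolding R'_def using IH(2) that \<rho>'_def by auto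
    have c3u: "B \<in> Inv2 n u \<longrightarrow> A \<in> Inv2 n u \<or> C \<in> Inv2 n u"
       "A \<in> Inv2 n u \<and> C \<in> Inv2 n u \<longrightarrow> B \<in> Inv2 n u"
      using closure3[OF pu, of x y z] H unfolding A_def B_def C_def by auto
    have c3w: "B \<in> insert t (Inv2 n u) \<longrightarrow> A \<in> insert t (Inv2 n u) \<or> C \<in> insert t (Inv2 n u)"
       "A \<in> insert t (Inv2 n u) \<and> C \<in> insert t (Inv2 n u) \<longrightarrow> B \<in> insert t (Inv2 n u)"
      using closure3[OF pw, of x y z] H unfolding A_def B_def C_def eI by auto
    show "(\<exists>k\<le>3. filter (\<lambda>c. c \<in> set (lex3 n x y z) \<inter> Inv2 n (u \<circ> sref n i)) (\<rho>' @ [t])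
              = take k (lex3 n x y z)) \<or>
          (\<exists>k\<le>3. filter (\<lambda>c. c \<in> set (lex3 n x y z) \<inter> Inv2 n (u \<circ> sref n i)) (\<rho>' @ [t])
              = take k (antilex3 n x y z))"
      unfolding L sL fs
    proof (cases "t \<in> {A, B, C}")
      case True
      then have tt: "t = A \<or> t = B \<or> t = C" by simp
      show "(\<exists>k\<le>3. R' @ (if t \<in> {A, B, C} then [t] else []) = take k [A, B, C]) \<or>
            (\<exists>k\<le>3. R' @ (if t \<in> {A, B, C} then [t] else []) = take k [C, B, A])"
        using comb_fwd[OF dABC R'h sR'[of A] sR'[of B] sR'[of C] tt tn c3w c3u] True by simp
    next
      case False
      then show "(\<exists>k\<le>3. R' @ (if t \<in> {A, B, C} then [t] else []) = take k [A, B, C]) \<or>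
            (\<exists>k\<le>3. R' @ (if t \<in> {A, B, C} then [t] else []) = take k [C, B, A])"
        using R'h by simp
    qed
  qed
  have cii: "cond_ii n (u \<circ> sref n i) (\<rho>' @ [t])"
    unfolding cond_ii_def
  proof (intro allI impI)
    fix x y :: int
    assume H: "x < y \<and> tcls n {x, y} \<in> Inv2 n (u \<circ> sref n i) \<and> tcls n {x, y + int n} \<in> Inv2 n (u \<circ> sref n i)"
    have r: "x mod int n \<noteq> y mod int n" using Inv2_res H by blast
    have dd: "tcls n {x, y} \<noteq> tcls n {x, y + int n}" using tcls_neq2[OF n2] H by blast
    show "before (\<rho>' @ [t]) (tcls n {x, y}) (tcls n {x, y + int n})"
    proof (cases "tcls n {x, y} \<in> Inv2 n u")
      case True
      show ?thesis
      proof (cases "tcls n {x, y + int n} \<in> Inv2 n u")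
        case True2: True
        then have "before \<rho>' (tcls n {x, y}) (tcls n {x, y + int n})"
          using IH(4) True H unfolding cond_ii_def \<rho>'_def by blast
        then show ?thesis by (rule before_append)
      next
        case False
        then have "tcls n {x, y + int n} = t" using H eI by auto
        then show ?thesis using before_snoc[of "tcls n {x, y}" \<rho>' t] True IH(2) \<rho>'_def by simp
      qed
    next
      case False
      then have "tcls n {x, y} = t" using H eI by auto
      then have "tcls n {x, y + int n} \<in> Inv2 n u" using H eI dd by auto
      then have "tcls n {x, y} \<in> Inv2 n u" using closure_pair[OF pu _ r] H by blast
      with False show ?thesis by simp
    qed
  qed
  show ?case unfolding wp rs using d s ci cii by blast
qed



lemma triple_contra:
  assumes n2: "n \<ge> 2" and pw: "per n w"
    and s: "set (\<rho>' @ [c]) = Inv2 n w" and ci: "cond_i n w (\<rho>' @ [c])"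
    and H: "x < y" "y < z" "x mod int n \<noteq> y mod int n" "x mod int n \<noteq> z mod int n" "y mod int n \<noteq> z mod int n"
    and pat: "(tcls n {x, y} \<notin> Inv2 n w \<and> tcls n {x, z} \<in> Inv2 n w \<and> tcls n {y, z} \<in> Inv2 n w \<and> c = tcls n {y, z})
      \<or> (tcls n {x, y} \<in> Inv2 n w \<and> tcls n {x, z} \<in> Inv2 n w \<and> tcls n {y, z} \<in> Inv2 n w \<and> c = tcls n {x, z})
      \<or> (tcls n {x, y} \<in> Inv2 n w \<and> tcls n {x, z} \<in> Inv2 n w \<and> tcls n {y, z} \<notin> Inv2 n w \<and> c = tcls n {x, y})"
  shows False
proof -
  define A B C where "A = tcls n {x, y}" and "B = tcls n {x, z}" and "C = tcls n {y, z}"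
  have L: "lex3 n x y z = [A, B, C]" "antilex3 n x y z = [C, B, A]"
    unfolding lex3_def antilex3_def A_def B_def C_def by simp_all
  have sL: "set [A, B, C] = {A, B, C}" by simp
  have dABC: "A \<noteq> B" "A \<noteq> C" "B \<noteq> C" using tcls_neq[OF n2, of x y z] H
    unfolding A_def B_def C_def by auto
  define R where "R = filter (\<lambda>c. c \<in> {A, B, C} \<inter> Inv2 n w) (\<rho>' @ [c])"
  have Rh: "(\<exists>k\<le>3. R = take k [A, B, C]) \<or> (\<exists>k\<le>3. R = take k [C, B, A])"
    using ci[unfolded cond_i_def, rule_format, of x y z] H unfolding Let_def L sL R_def by blast
  have cI: "c \<in> {A, B, C} \<inter> Inv2 n w" using pat unfolding A_def B_def C_def by auto
  have Re: "R = filter (\<lambda>c. c \<in> {A, B, C} \<inter> Inv2 n w) \<rho>' @ [c]" unfolding R_def using cI by simp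
  have Rn: "R \<noteq> []" "last R = c" unfolding Re by simp_all
  have mem: "X \<in> set R \<longleftrightarrow> X \<in> Inv2 n w" if "X \<in> {A, B, C}" for X
    unfolding R_def using s that by auto
  show False
    using comb_back[OF dABC Rh Rn] pat mem[of A] mem[of B] mem[of C] unfolding A_def B_def C_def by auto
qed

lemma descent_last:
  assumes n2: "n \<ge> 2" and pw: "per n w" and d: "distinct (\<rho>' @ [c])"
    and s: "set (\<rho>' @ [c]) = Inv2 n w" and ci: "cond_i n w (\<rho>' @ [c])" and cii: "cond_ii n w (\<rho>' @ [c])"
    and c: "c = tcls n {a, b}" and ab: "a < b" and r: "a mod int n \<noteq> b mod int n"
    and pq: "inv w b < inv w a"
  shows "inv w a = inv w b + 1"
proof (rule ccontr)
  assume ne: "inv w a \<noteq> inv w b + 1"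
  define p q where "p = inv w b" and "q = inv w a"
  have bw: "bij w" using pw per_def by blast
  have wp: "w p = b" "w q = a" unfolding p_def q_def using bw by (simp_all add: bij_is_surj surj_f_inv_f)
  have q2: "q \<ge> p + 2" using ne pq unfolding p_def q_def by simp
  have n0: "int n > 0" using n2 by simp
  consider (big) "q - p > int n" | (eq) "q - p = int n" | (small) "q - p < int n" by linarith
  then show False
  proof cases
    case big
    have r2: "a mod int n \<noteq> (b + int n) mod int n" using r by simp
    have "inv w (b + int n) = p + int n" using inv_mult[OF pw, of b 1] p_def by simp
    then have "tcls n {a, b + int n} \<in> Inv2 n w" using mem_Inv2[OF pw r2] big ab q_def n0 by simp
    moreover have "tcls n {a, b} \<in> Inv2 n w" using s c by auto
    ultimately have "before (\<rho>' @ [c]) c (tcls n {a, b + int n})"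
      using cii ab c unfolding cond_ii_def by blast
    then show False using before_last[OF d] by blast
  next
    case eq
    then have "q = p + int n" by simp
    then have "w q = w p + int n" using pw per_def by simp
    then show False using wp ab n0 by simp
  next
    case small
    define m where "m = p + 1"
    define e where "e = w m"
    have ge: "inv w e = m" unfolding e_def using bw by (simp add: bij_is_inj)
    have pinv: "per n (inv w)" using per_inv[OF pw] .
    have mq: "m mod int n \<noteq> q mod int n"
    proof
      assume "m mod int n = q mod int n"
      then obtain k where k: "q = m + k * int n" using mod_ex by blast
      have "0 < k * int n" "k * int n < int n" using k q2 small unfolding m_def by linarith+
      then have "k > 0" using n0 by (simp add: zero_less_mult_iff)
      then have "k * int n \<ge> 1 * int n" using n0 by (intro mult_right_mono) simp_all
      then show False using \<open>k * int n < int n\<close> by simp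
    qed
    have mp: "m mod int n \<noteq> p mod int n" unfolding m_def using mod_succ_neq[OF n2] by blast
    have ea: "e mod int n \<noteq> a mod int n"
      using per_res[OF pinv, of e a] ge mq q_def by simp
    have eb: "e mod int n \<noteq> b mod int n"
      using per_res[OF pinv, of e b] ge mp p_def by simp
    have gl: "inv w e = p + 1" "inv w a = q" "inv w b = p" using ge m_def p_def q_def by simp_all
    have cI: "c \<in> Inv2 n w" using s by auto
    consider (lt) "e < a" | (mid) "a < e" "e < b" | (gt) "b < e"
      using ea eb by (metis linorder_neqE_linordered_idom)
    then show False
    proof cases
      case lt
      have r1: "e mod int n \<noteq> a mod int n" "e mod int n \<noteq> b mod int n" "a mod int n \<noteq> b mod int n"
        using ea eb r by auto
      show False
        apply (rule triple_contra[OF n2 pw s ci lt ab r1])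
        using mem_Inv2[OF pw r1(1)] mem_Inv2[OF pw r1(2)] gl lt ab q2 cI c by auto
    next
      case mid
      have r1: "a mod int n \<noteq> e mod int n" "a mod int n \<noteq> b mod int n" "e mod int n \<noteq> b mod int n"
        using ea eb r by auto
      show False
        apply (rule triple_contra[OF n2 pw s ci mid r1])
        using mem_Inv2[OF pw r1(1)] mem_Inv2[OF pw r1(3)] gl mid q2 cI c by auto
    next
      case gt
      have r1: "a mod int n \<noteq> b mod int n" "a mod int n \<noteq> e mod int n" "b mod int n \<noteq> e mod int n"
        using ea eb r by auto
      show False
        apply (rule triple_contra[OF n2 pw s ci ab gt r1])
        using mem_Inv2[OF pw r1(2)] mem_Inv2[OF pw r1(3)] gl gt ab q2 cI c by auto
    qed
  qed
qed



lemma take_snoc_prev: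
  assumes "\<exists>k\<le>3. xs @ [c] = take k L" "length L = 3"
  shows "\<exists>k\<le>3. xs = take k L"
proof -
  obtain k where k: "k \<le> 3" "xs @ [c] = take k L" using assms(1) by blast
  have "xs = butlast (take k L)" using k(2) by (metis butlast_snoc)
  also have "\<dots> = take (k - 1) L" using k(1) assms(2) by (simp add: butlast_take)
  finally show ?thesis using k(1) by (intro exI[of _ "k - 1"]) simp
qed

lemma backward:
  assumes n2: "n \<ge> 2"
  shows "affine_perm n w \<Longrightarrow> distinct \<rho> \<Longrightarrow> set \<rho> = Inv2 n w \<Longrightarrow> cond_i n w \<rho> \<Longrightarrow> cond_ii n w \<rho> \<Longrightarrow>
    \<exists>ws. is_word n ws \<and> word_prod n ws = w \<and> refl_seq n ws = \<rho>"
proof (induction \<rho> arbitrary: w rule: rev_induct)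
  case Nil
  then have "w = id" using Inv2_empty_id[OF n2 Nil.prems(1)] by simp
  then show ?case by (intro exI[of _ "[]"]) (simp add: is_word_def word_prod_Nil refl_seq_Nil)
next
  case (snoc c \<rho>')
  have aw: "affine_perm n w" by (rule snoc.prems(1))
  have pw: "per n w" using affine_per[OF aw] .
  have bw: "bij w" using pw per_def by blast
  have d: "distinct (\<rho>' @ [c])" and s: "set (\<rho>' @ [c]) = Inv2 n w"
    and ci: "cond_i n w (\<rho>' @ [c])" and cii: "cond_ii n w (\<rho>' @ [c])" using snoc.prems by auto
  have cI: "c \<in> Inv2 n w" using s by auto
  obtain a b where ab: "c = tcls n {a, b}" "a < b" "a mod int n \<noteq> b mod int n" "inv w b < inv w a"
    using Inv2_form[OF cI] by blast
  define p where "p = inv w b"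
  have q: "inv w a = p + 1" unfolding p_def using descent_last[OF n2 pw d s ci cii ab] .
  have wp: "w p = b" "w (p + 1) = a" using bw q unfolding p_def
    by (metis bij_inv_eq_iff)+
  define i where "i = nat (p mod int n)"
  define k where "k = p div int n"
  have n0: "int n > 0" using n2 by simp
  have ii: "int i = p mod int n" unfolding i_def using n0 by simp
  have il: "i < n" unfolding i_def using n0 by (simp add: nat_less_iff)
  have pik: "p = int i + k * int n" unfolding ii k_def by simp
  have w1: "w (int i) = b - k * int n"
    using per_mult[OF pw, of p "- k"] wp pik by (simp add: algebra_simps)
  have w2: "w (int i + 1) = a - k * int n"
    using per_mult[OF pw, of "p + 1" "- k"] wp pik by (simp add: algebra_simps)
  have tc: "tcls n {w (int i), w (int i + 1)} = c"
    unfolding w1 w2 ab(1) tcls_pair_eq by (intro exI[of _ "-k"]) (auto simp: algebra_simps)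
  define w' where "w' = w \<circ> sref n i"
  have e: "Inv2 n w' = Inv2 n w - {c}"
    using Inv2_step_set[OF n2 pw, of i] tc cI unfolding w'_def by simp
  have aw': "affine_perm n w'" unfolding w'_def using affine_step[OF n2 il aw] .
  have s': "set \<rho>' = Inv2 n w'" using e s d by auto
  have d': "distinct \<rho>'" using d by simp
  have cn: "c \<notin> Inv2 n w'" using e by simp
  have Iw: "Inv2 n w = insert c (Inv2 n w')" using e cI by auto
  have ci': "cond_i n w' \<rho>'"
    unfolding cond_i_def Let_def
  proof (intro allI impI)
    fix x y z :: int
    assume H: "x < y \<and> y < z \<and> x mod int n \<noteq> y mod int n \<and> x mod int n \<noteq> z mod int n
       \<and> y mod int n \<noteq> z mod int n"
    define L where "L = lex3 n x y z"
    define L' where "L' = antilex3 n x y z"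
    have lL: "length L = 3" "length L' = 3" unfolding L_def L'_def lex3_def antilex3_def by simp_all
    define R' where "R' = filter (\<lambda>c. c \<in> set L \<inter> Inv2 n w') \<rho>'"
    have Rh: "(\<exists>k\<le>3. filter (\<lambda>c. c \<in> set L \<inter> Inv2 n w) (\<rho>' @ [c]) = take k L) \<or>
              (\<exists>k\<le>3. filter (\<lambda>c. c \<in> set L \<inter> Inv2 n w) (\<rho>' @ [c]) = take k L')"
      using ci[unfolded cond_i_def, rule_format, OF H] unfolding Let_def L_def L'_def .
    have fs: "filter (\<lambda>c. c \<in> set L \<inter> Inv2 n w) (\<rho>' @ [c]) = R' @ (if c \<in> set L then [c] else [])"
      unfolding R'_def Iw by (rule filter_snoc_split) (use s' in auto)
    show "(\<exists>k\<le>3. filter (\<lambda>c. c \<in> set (lex3 n x y z) \<inter> Inv2 n w') \<rho>' = take k (lex3 n x y z)) \<or>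
          (\<exists>k\<le>3. filter (\<lambda>c. c \<in> set (lex3 n x y z) \<inter> Inv2 n w') \<rho>' = take k (antilex3 n x y z))"
      unfolding L_def[symmetric] L'_def[symmetric] R'_def[symmetric]
    proof (cases "c \<in> set L")
      case True
      then show "(\<exists>k\<le>3. R' = take k L) \<or> (\<exists>k\<le>3. R' = take k L')"
      proof -
        have "(\<exists>k\<le>3. R' @ [c] = take k L) \<or> (\<exists>k\<le>3. R' @ [c] = take k L')"
          using Rh True unfolding fs by simp
        then show ?thesis
        proof
          assume "\<exists>k\<le>3. R' @ [c] = take k L"
          from take_snoc_prev[OF this lL(1)] show ?thesis ..
        next
          assume "\<exists>k\<le>3. R' @ [c] = take k L'"
          from take_snoc_prev[OF this lL(2)] show ?thesis ..
        qed
      qed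
    next
      case False
      then show "(\<exists>k\<le>3. R' = take k L) \<or> (\<exists>k\<le>3. R' = take k L')" using Rh unfolding fs by simp
    qed
  qed
  have cii': "cond_ii n w' \<rho>'"
    unfolding cond_ii_def
  proof (intro allI impI)
    fix x y :: int
    assume H: "x < y \<and> tcls n {x, y} \<in> Inv2 n w' \<and> tcls n {x, y + int n} \<in> Inv2 n w'"
    then have "before (\<rho>' @ [c]) (tcls n {x, y}) (tcls n {x, y + int n})"
      using cii Iw unfolding cond_ii_def by blast
    moreover have "tcls n {x, y + int n} \<noteq> c" using H cn by auto
    ultimately show "before \<rho>' (tcls n {x, y}) (tcls n {x, y + int n})" by (rule before_butlast)
  qed
  obtain ws where ws: "is_word n ws" "word_prod n ws = w'" "refl_seq n ws = \<rho>'"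
    using snoc.IH[OF aw' d' s' ci' cii'] by blast
  have wpr: "word_prod n (ws @ [i]) = w" unfolding word_prod_snoc ws(2) w'_def
    by (simp add: comp_assoc sref_comp[OF n2])
  have s1: "sref n i (int i) = int i + 1" unfolding sref_def by simp
  have s2: "sref n i (int i + 1) = int i" using sref_invol[OF n2, of i "int i"] s1 by simp
  have "tcls n {w' (int i), w' (int i + 1)} = c"
    unfolding w'_def comp_def s1 s2 using tc tcls_swap by metis
  then have "refl_seq n (ws @ [i]) = \<rho>' @ [c]" unfolding refl_seq_snoc ws(2,3) by simp
  moreover have "is_word n (ws @ [i])" using ws(1) il unfolding is_word_def by simp
  ultimately show ?case using wpr by blast
qed

theorem corollary4p2:
  fixes n :: nat and w :: "int \<Rightarrow> int" and \<rho> :: "int set set list"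
  assumes "n \<ge> 2" and "affine_perm n w" and "total_order_of (Inv2 n w) \<rho>"
  shows "reflection_order n w \<rho> \<longleftrightarrow> cond_i n w \<rho> \<and> cond_ii n w \<rho>"
proof
  assume "reflection_order n w \<rho>"
  then obtain ws where ws: "reduced_word n w ws" "\<rho> = refl_seq n ws" unfolding reflection_order_def by blast
  have fin: "finite (Inv2 n w)" using assms(3) unfolding total_order_of_def by (metis List.finite_set)
  obtain vs where vs: "is_word n vs" "word_prod n vs = w" "length vs = card (Inv2 n w)"
    using exists_word[OF assms(1,2) fin] by blast
  have wpw: "word_prod n ws = w" using ws(1) unfolding reduced_word_def by blast
  have "length ws \<le> length vs" using ws(1) vs unfolding reduced_word_def by blast
  moreover have "card (Inv2 n w) \<le> length ws" using Inv2_word_bound[OF assms(1), of ws] wpw by simp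
  ultimately have "length ws = card (Inv2 n (word_prod n ws))" using vs(3) wpw by simp
  from forward[OF assms(1) this] show "cond_i n w \<rho> \<and> cond_ii n w \<rho>" using ws(2) wpw by simp
next
  assume h: "cond_i n w \<rho> \<and> cond_ii n w \<rho>"
  have d: "distinct \<rho>" "set \<rho> = Inv2 n w" using assms(3) unfolding total_order_of_def by auto
  obtain ws where ws: "is_word n ws" "word_prod n ws = w" "refl_seq n ws = \<rho>"
    using backward[OF assms(1,2) d] h by blast
  have lw: "length ws = card (Inv2 n w)"
    using ws(3) d distinct_card[OF d(1)] length_refl_seq[of n ws] by simp
  have "reduced_word n w ws" unfolding reduced_word_def
  proof (intro conjI allI impI)
    fix vs assume "is_word n vs \<and> word_prod n vs = w"
    then show "length ws \<le> length vs" using Inv2_word_bound[OF assms(1), of vs] lw by simp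
  qed (use ws in auto)
  then show "reflection_order n w \<rho>" unfolding reflection_order_def using ws(3) by blast
qed

end
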